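(* Let $\{\alpha_{n,m}\in k^\times:n\in\mathbb{Z},m\in\mathbb{N}\}$ be a family of nonzero scalars and let $\phi:H\to H$ be the linear map with $\phi(x^ny^m)=\alpha_{n,m}x^ny^m$ for all $n\in\mathbb{Z}$, $m\in\mathbb{N}$. Then $\phi$ is a coalgebra automorphism of $H$ if and only if $\alpha_{n,m}=\alpha_{n,i}\alpha_{n+i,m-i}$ for all $n\in\mathbb{Z}$, $m\in\mathbb{N}$ and $0\leq i\leq m$.
   Context: Let $k$ be a field and $0\neq q\in k$ not a root of unity. $H=k_q[x,x^{-1},y]$ is the $k$-algebra generated by $x,x^{-1},y$ with $xx^{-1}=x^{-1}x=1$, $yx=qxy$, a Hopf algebra with $\Delta(x)=x\otimes x$, $\Delta(x^{-1})=x^{-1}\otimes x^{-1}$, $\Delta(y)=y\otimes x+1\otimes y$, $\varepsilon(x)=1$, $\varepsilon(y)=0$; $\{x^ny^m:n\in\mathbb{Z},m\in\mathbb{N}\}$ is a $k$-basis, and $\Delta(x^ny^m)=\sum_{i=0}^m\binom{m}{i}_qx^ny^i\otimes x^{n+i}y^{m-i}$ with $q$-binomial coefficients $\binom{m}{i}_q$. *)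

theory Defs
  imports Main "HOL-Library.Poly_Mapping"
begin

text \<open>The quantum plane H = k_q[x,x^-1,y] as a k-vector space: finitely supported
  coefficient functions on its basis x^n y^m, indexed by (n,m) :: int * nat.
  H tensor H is identified with finitely supported functions on pairs of basis
  indices (its standard basis of elementary tensors).\<close>

type_synonym 'k qH = "(int \<times> nat) \<Rightarrow>\<^sub>0 'k"
type_synonym 'k qHH = "((int \<times> nat) \<times> (int \<times> nat)) \<Rightarrow>\<^sub>0 'k"

definition smultH :: "'k::field \<Rightarrow> ('b \<Rightarrow>\<^sub>0 'k) \<Rightarrow> ('b \<Rightarrow>\<^sub>0 'k)" where
  "smultH c h = (\<Sum>b\<in>Poly_Mapping.keys h. Poly_Mapping.single b (c * Poly_Mapping.lookup h b))"

definition bas :: "int \<Rightarrow> nat \<Rightarrow> 'k::field qH" where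
  "bas n m = Poly_Mapping.single (n, m) 1"

definition tens :: "'k::field qH \<Rightarrow> 'k qH \<Rightarrow> 'k qHH" where
  "tens u v = (\<Sum>a\<in>Poly_Mapping.keys u. \<Sum>b\<in>Poly_Mapping.keys v. Poly_Mapping.single (a, b) (Poly_Mapping.lookup u a * Poly_Mapping.lookup v b))"

definition tmap :: "('k::field qH \<Rightarrow> 'k qH) \<Rightarrow> ('k qH \<Rightarrow> 'k qH) \<Rightarrow> 'k qHH \<Rightarrow> 'k qHH" where
  "tmap f g T = (\<Sum>p\<in>Poly_Mapping.keys T. smultH (Poly_Mapping.lookup T p)
       (tens (f (Poly_Mapping.single (fst p) 1)) (g (Poly_Mapping.single (snd p) 1))))"

fun qbinom :: "'k::field \<Rightarrow> nat \<Rightarrow> nat \<Rightarrow> 'k" where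
  "qbinom q 0 i = (if i = 0 then 1 else 0)"
| "qbinom q (Suc m) 0 = 1"
| "qbinom q (Suc m) (Suc i) = qbinom q m i + q ^ Suc i * qbinom q m (Suc i)"

definition Delta_bas :: "'k::field \<Rightarrow> int \<Rightarrow> nat \<Rightarrow> 'k qHH" where
  "Delta_bas q n m = (\<Sum>i\<in>{0..m}. smultH (qbinom q m i) (tens (bas n i) (bas (n + int i) (m - i))))"

definition Delta :: "'k::field \<Rightarrow> 'k qH \<Rightarrow> 'k qHH" where
  "Delta q h = (\<Sum>b\<in>Poly_Mapping.keys h. smultH (Poly_Mapping.lookup h b) (Delta_bas q (fst b) (snd b)))"

definition eps :: "'k::field qH \<Rightarrow> 'k" where
  "eps h = (\<Sum>b\<in>Poly_Mapping.keys h. if snd b = 0 then Poly_Mapping.lookup h b else 0)"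

definition linearH :: "('k::field qH \<Rightarrow> 'k qH) \<Rightarrow> bool" where
  "linearH f \<longleftrightarrow> (\<forall>u v. f (u + v) = f u + f v) \<and> (\<forall>c u. f (smultH c u) = smultH c (f u))"

definition coalg_aut :: "'k::field \<Rightarrow> ('k qH \<Rightarrow> 'k qH) \<Rightarrow> bool" where
  "coalg_aut q f \<longleftrightarrow> linearH f \<and> bij f \<and>
     (\<forall>h. Delta q (f h) = tmap f f (Delta q h)) \<and> (\<forall>h. eps (f h) = eps h)"

definition diagmap :: "(int \<times> nat \<Rightarrow> 'k::field) \<Rightarrow> 'k qH \<Rightarrow> 'k qH" where
  "diagmap \<alpha> h = (\<Sum>b\<in>Poly_Mapping.keys h. Poly_Mapping.single b (\<alpha> b * Poly_Mapping.lookup h b))"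

end

theory Submission imports Defs begin

lemma sum_keys_single:
  "(\<Sum>b\<in>Poly_Mapping.keys h. Poly_Mapping.lookup (Poly_Mapping.single b (f b)) x) = (if x \<in> Poly_Mapping.keys h then f x else 0)"
  by (simp add: lookup_single Poly_Mapping.when_def if_distrib sum.If_cases)

lemma lookup_smultH[simp]: "Poly_Mapping.lookup (smultH c h) b = c * Poly_Mapping.lookup h b"
  unfolding smultH_def lookup_sum sum_keys_single by (auto simp: in_keys_iff)

lemma lookup_diagmap[simp]: "Poly_Mapping.lookup (diagmap \<alpha> h) b = \<alpha> b * Poly_Mapping.lookup h b"
  unfolding diagmap_def lookup_sum sum_keys_single by (auto simp: in_keys_iff)

lemma lookup_tens[simp]: "Poly_Mapping.lookup (tens u v) p = Poly_Mapping.lookup u (fst p) * Poly_Mapping.lookup v (snd p)"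
proof -
  obtain a b where p: "p = (a,b)" by (cases p)
  have "Poly_Mapping.lookup (tens u v) p = (\<Sum>a'\<in>Poly_Mapping.keys u. if a' = a then (\<Sum>b'\<in>Poly_Mapping.keys v. if b' = b then Poly_Mapping.lookup u a * Poly_Mapping.lookup v b' else 0) else 0)"
    unfolding tens_def lookup_sum p by (intro sum.cong refl) (auto simp: lookup_single Poly_Mapping.when_def)
  also have "\<dots> = (if a \<in> Poly_Mapping.keys u then (if b \<in> Poly_Mapping.keys v then Poly_Mapping.lookup u a * Poly_Mapping.lookup v b else 0) else 0)"
    by (simp only: sum.delta finite_keys)
  also have "\<dots> = Poly_Mapping.lookup u a * Poly_Mapping.lookup v b"
    by (auto simp: in_keys_iff)
  finally show ?thesis by (simp add: p)
qed

lemma lookup_diag_single: "Poly_Mapping.lookup (diagmap \<alpha> (Poly_Mapping.single a 1)) b = (if a = b then \<alpha> b else 0)"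
  by (simp add: lookup_single Poly_Mapping.when_def)

lemma lookup_tmap_diag:
  "Poly_Mapping.lookup (tmap (diagmap \<alpha>) (diagmap \<alpha>) T) r = \<alpha> (fst r) * \<alpha> (snd r) * Poly_Mapping.lookup T r"
proof -
  have "Poly_Mapping.lookup (tmap (diagmap \<alpha>) (diagmap \<alpha>) T) r =
     (\<Sum>p\<in>Poly_Mapping.keys T. if p = r then \<alpha> (fst r) * \<alpha> (snd r) * Poly_Mapping.lookup T r else 0)"
    unfolding tmap_def lookup_sum
    by (intro sum.cong refl) (auto simp: lookup_single Poly_Mapping.when_def prod_eq_iff)
  also have "\<dots> = \<alpha> (fst r) * \<alpha> (snd r) * Poly_Mapping.lookup T r"
    by (auto simp: in_keys_iff)
  finally show ?thesis .
qed

lemma lookup_Delta_bas: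
  "Poly_Mapping.lookup (Delta_bas q n m) ((a,i),(c,j)) =
    (if a = n \<and> i + j = m \<and> c = n + int i then qbinom q m i else 0)"
proof -
  have "Poly_Mapping.lookup (Delta_bas q n m) ((a,i),(c,j)) =
     (\<Sum>i'\<in>{0..m}. if i' = i then (if a = n \<and> i + j = m \<and> c = n + int i then qbinom q m i else 0) else 0)"
    unfolding Delta_bas_def lookup_sum
    by (intro sum.cong refl) (auto simp: bas_def lookup_single Poly_Mapping.when_def)
  also have "\<dots> = (if a = n \<and> i + j = m \<and> c = n + int i then qbinom q m i else 0)"
    by auto
  finally show ?thesis .
qed

lemma lookup_Delta:
  "Poly_Mapping.lookup (Delta q h) ((a,i),(c,j)) =
    (if c = a + int i then qbinom q (i+j) i * Poly_Mapping.lookup h (a, i+j) else 0)"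
proof -
  have "Poly_Mapping.lookup (Delta q h) ((a,i),(c,j)) =
     (\<Sum>b\<in>Poly_Mapping.keys h. if b = (a, i+j) then (if c = a + int i then qbinom q (i+j) i * Poly_Mapping.lookup h (a, i+j) else 0) else 0)"
    unfolding Delta_def lookup_sum
    by (intro sum.cong refl) (auto simp: lookup_Delta_bas)
  also have "\<dots> = (if c = a + int i then qbinom q (i+j) i * Poly_Mapping.lookup h (a, i+j) else 0)"
    by (auto simp: in_keys_iff)
  finally show ?thesis .
qed

lemma qbinom_gt: "m < i \<Longrightarrow> qbinom q m i = 0"
  by (induction q m i rule: qbinom.induct) auto

lemma qbinom_diag: "qbinom q m m = 1"
  by (induction m) (auto simp: qbinom_gt)

lemma qbinom_0[simp]: "qbinom q m 0 = 1"
  by (cases m) auto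

lemma qbinom_R2: "k \<le> m \<Longrightarrow> qbinom q (Suc m) (Suc k) = q ^ (m - k) * qbinom q m k + qbinom q m (Suc k)"
proof (induction m arbitrary: k)
  case 0 then show ?case by simp
next
  case (Suc m)
  show ?case
  proof (cases k)
    case 0
    have a: "qbinom q (Suc m) 1 = q ^ m + qbinom q m 1" using Suc.IH[of 0] by simp
    have b: "qbinom q (Suc m) 1 = 1 + q * qbinom q m 1" by simp
    show ?thesis using a b 0 by (simp add: algebra_simps)
  next
    case (Suc k')
    show ?thesis
    proof (cases "k' = m")
      case True then show ?thesis using Suc by (simp add: qbinom_diag qbinom_gt)
    next
      case False
      with Suc Suc.prems have km: "k' < m" by simp
      have i1: "qbinom q (Suc m) (Suc k') = q ^ (m - k') * qbinom q m k' + qbinom q m (Suc k')"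
        by (rule Suc.IH) (use km in simp)
      have i2: "qbinom q (Suc m) (Suc (Suc k')) = q ^ (m - Suc k') * qbinom q m (Suc k') + qbinom q m (Suc (Suc k'))"
        by (rule Suc.IH) (use km in simp)
      have e: "m - k' = Suc (m - Suc k')" using km by simp
      have r1: "qbinom q (Suc m) (Suc k') = qbinom q m k' + q ^ Suc k' * qbinom q m (Suc k')" by simp
      have r2: "qbinom q (Suc m) (Suc (Suc k')) = qbinom q m (Suc k') + q ^ Suc (Suc k') * qbinom q m (Suc (Suc k'))" by simp
      have pw: "q ^ Suc (Suc k') * q ^ (m - Suc k') = q ^ (m - k') * q ^ Suc k'"
        using km by (simp add: power_add[symmetric] e)
      have pw2: "q ^ Suc (Suc k') * (q ^ (m - Suc k') * qbinom q m (Suc k')) = q ^ (m - k') * (q ^ Suc k' * qbinom q m (Suc k'))"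
        using pw by (metis mult.assoc)
      have L: "qbinom q (Suc (Suc m)) (Suc k) = qbinom q (Suc m) (Suc k') + q ^ Suc (Suc k') * qbinom q (Suc m) (Suc (Suc k'))"
        unfolding Suc by (rule qbinom.simps(3))
      have ek: "Suc m - k = m - k'" using Suc by simp
      have "qbinom q (Suc m) (Suc k') + q ^ Suc (Suc k') * qbinom q (Suc m) (Suc (Suc k'))
          = (q ^ (m - k') * qbinom q m k' + qbinom q m (Suc k')) + q ^ Suc (Suc k') * (q ^ (m - Suc k') * qbinom q m (Suc k') + qbinom q m (Suc (Suc k')))"
        using i1 i2 by simp
      also have "\<dots> = q ^ (m - k') * (qbinom q m k' + q ^ Suc k' * qbinom q m (Suc k')) + (qbinom q m (Suc k') + q ^ Suc (Suc k') * qbinom q m (Suc (Suc k')))"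
        unfolding distrib_left pw2 by (simp add: algebra_simps)
      also have "\<dots> = q ^ (m - k') * qbinom q (Suc m) (Suc k') + qbinom q (Suc m) (Suc (Suc k'))"
        using r1 r2 by simp
      finally show ?thesis using L ek Suc by simp
    qed
  qed
qed

lemma lin_help:
  assumes h: "(A::'a::comm_ring_1) = a + x * (A - z * a)" and y: "x * z = y"
  shows "A * (1 - x) = (1 - y) * a"
proof -
  have "A - x * A = (a + x * (A - z * a)) - x * A"
    using arg_cong[OF h, of "\<lambda>t. t - x * A"] .
  also have "\<dots> = a - (x * z) * a" by (simp add: algebra_simps)
  finally show ?thesis unfolding y by (simp add: algebra_simps)
qed

lemma qbinom_T: "k \<le> m \<Longrightarrow> qbinom q (Suc m) (Suc k) * (1 - q ^ Suc k) = (1 - q ^ Suc m) * qbinom q m k"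
proof -
  assume km: "k \<le> m"
  have r1: "qbinom q (Suc m) (Suc k) = qbinom q m k + q ^ Suc k * qbinom q m (Suc k)" by (rule qbinom.simps(3))
  have r2: "qbinom q (Suc m) (Suc k) = q ^ (m - k) * qbinom q m k + qbinom q m (Suc k)" using qbinom_R2[OF km] .
  have pw: "q ^ Suc k * q ^ (m - k) = q ^ Suc m" using km by (simp only: power_add[symmetric]) simp
  have b: "qbinom q m (Suc k) = qbinom q (Suc m) (Suc k) - q ^ (m - k) * qbinom q m k" using r2 by (simp only: eq_diff_eq add.commute)
  have "qbinom q (Suc m) (Suc k) = qbinom q m k + q ^ Suc k * (qbinom q (Suc m) (Suc k) - q ^ (m - k) * qbinom q m k)"
    using r1 unfolding b[symmetric] .
  from lin_help[OF this pw] show ?thesis .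
qed

lemma qbinom_nz:
  assumes "\<forall>n::nat. n > 0 \<longrightarrow> (q::'k::field) ^ n \<noteq> 1"
  shows "i \<le> m \<Longrightarrow> qbinom q m i \<noteq> 0"
proof (induction m arbitrary: i)
  case 0 then show ?case by simp
next
  case (Suc m)
  show ?case
  proof (cases i)
    case 0 then show ?thesis by simp
  next
    case (Suc k)
    with Suc.prems have km: "k \<le> m" by simp
    have "(1 - q ^ Suc m) * qbinom q m k \<noteq> 0" using Suc.IH[OF km] assms by auto
    then have "qbinom q (Suc m) (Suc k) * (1 - q ^ Suc k) \<noteq> 0" using qbinom_T[OF km, of q] by argo
    then show ?thesis using Suc by auto
  qed
qed


lemma linear_diag: "linearH (diagmap \<alpha>)"
  unfolding linearH_def
  by (auto intro!: poly_mapping_eqI simp: lookup_add algebra_simps)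

lemma bij_diag:
  assumes "\<forall>b. \<alpha> b \<noteq> (0::'k::field)"
  shows "bij (diagmap \<alpha>)"
proof (rule bijI)
  show "inj (diagmap \<alpha>)"
  proof (rule injI)
    fix u v assume "diagmap \<alpha> u = diagmap \<alpha> v"
    then have "\<And>b. \<alpha> b * Poly_Mapping.lookup u b = \<alpha> b * Poly_Mapping.lookup v b"
      by (metis lookup_diagmap)
    then show "u = v" using assms by (intro poly_mapping_eqI) auto
  qed
  show "surj (diagmap \<alpha>)"
  proof (rule surjI)
    fix g
    show "diagmap \<alpha> (diagmap (\<lambda>b. inverse (\<alpha> b)) g) = g"
      using assms by (intro poly_mapping_eqI) auto
  qed
qed

lemma keys_diag:
  assumes "\<forall>b. \<alpha> b \<noteq> (0::'k::field)"
  shows "Poly_Mapping.keys (diagmap \<alpha> h) = Poly_Mapping.keys h"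
  using assms by (auto simp: in_keys_iff)

lemma eps_diag:
  assumes "\<forall>b. \<alpha> b \<noteq> (0::'k::field)" and "\<forall>n. \<alpha> (n, 0) = 1"
  shows "eps (diagmap \<alpha> h) = eps h"
  unfolding eps_def keys_diag[OF assms(1)]
  using assms(2) by (intro sum.cong refl) auto

theorem lemma2p11:
  fixes q :: "'k::field" and \<alpha> :: "int \<times> nat \<Rightarrow> 'k"
  assumes "q \<noteq> 0"
    and "\<forall>n::nat. n > 0 \<longrightarrow> q ^ n \<noteq> 1"
    and "\<forall>n m. \<alpha> (n, m) \<noteq> 0"
  shows "coalg_aut q (diagmap \<alpha>) \<longleftrightarrow>
    (\<forall>(n::int) (m::nat) (i::nat). i \<le> m \<longrightarrow> \<alpha> (n, m) = \<alpha> (n, i) * \<alpha> (n + int i, m - i))"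
proof
  assume A: "coalg_aut q (diagmap \<alpha>)"
  show "\<forall>(n::int) (m::nat) (i::nat). i \<le> m \<longrightarrow> \<alpha> (n, m) = \<alpha> (n, i) * \<alpha> (n + int i, m - i)"
  proof (intro allI impI)
    fix n :: int and m i :: nat assume im: "i \<le> m"
    define h :: "'k qH" where "h = Poly_Mapping.single (n, m) 1"
    from A have "Delta q (diagmap \<alpha> h) = tmap (diagmap \<alpha>) (diagmap \<alpha>) (Delta q h)"
      unfolding coalg_aut_def by blast
    then have "Poly_Mapping.lookup (Delta q (diagmap \<alpha> h)) ((n,i),(n + int i, m - i)) =
       Poly_Mapping.lookup (tmap (diagmap \<alpha>) (diagmap \<alpha>) (Delta q h)) ((n,i),(n + int i, m - i))"
      by simp
    then have "qbinom q m i * \<alpha> (n, m) = \<alpha> (n, i) * \<alpha> (n + int i, m - i) * qbinom q m i"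
      using im by (simp add: lookup_tmap_diag lookup_Delta h_def)
    moreover have "qbinom q m i \<noteq> 0" using qbinom_nz[OF assms(2) im] .
    ultimately show "\<alpha> (n, m) = \<alpha> (n, i) * \<alpha> (n + int i, m - i)"
      by (metis mult.commute mult_left_cancel)
  qed
next
  assume C: "\<forall>(n::int) (m::nat) (i::nat). i \<le> m \<longrightarrow> \<alpha> (n, m) = \<alpha> (n, i) * \<alpha> (n + int i, m - i)"
  have nz: "\<forall>b. \<alpha> b \<noteq> 0" using assms(3) by auto
  have one: "\<forall>n. \<alpha> (n, 0) = 1"
  proof
    fix n
    have "\<alpha> (n, 0) = \<alpha> (n, 0) * \<alpha> (n, 0)" using C[rule_format, of 0 0 n] by simp
    then show "\<alpha> (n, 0) = 1" using assms(3) by (metis mult_cancel_left1)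
  qed
  have D: "Delta q (diagmap \<alpha> h) = tmap (diagmap \<alpha>) (diagmap \<alpha>) (Delta q h)" for h
  proof (rule poly_mapping_eqI)
    fix r :: "(int \<times> nat) \<times> (int \<times> nat)"
    obtain a i c j where r: "r = ((a,i),(c,j))" by (metis prod.collapse)
    have "\<alpha> (a, i + j) = \<alpha> (a, i) * \<alpha> (a + int i, j)"
      using C[rule_format, of i "i+j" a] by simp
    then show "Poly_Mapping.lookup (Delta q (diagmap \<alpha> h)) r =
      Poly_Mapping.lookup (tmap (diagmap \<alpha>) (diagmap \<alpha>) (Delta q h)) r"
      unfolding r lookup_tmap_diag lookup_Delta by (simp add: algebra_simps)
  qed
  show "coalg_aut q (diagmap \<alpha>)"
    unfolding coalg_aut_def using linear_diag bij_diag[OF nz] D eps_diag[OF nz one] by blast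
qed

end
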